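(* Let $\zeta\in\mathbb{C}^*$. The group $\overline{G}_q(\zeta):=\mathrm{PSL}_q(2,\mathbb{Z})|_{q=\zeta}$ is finite if and only if $\zeta$ is a primitive $n$-th root of unity for some $n\in\{2,3,4,5\}$.
   Context: Let $q$ be a formal parameter and let $R_q=\begin{pmatrix} q & 1\\ 0 & 1\end{pmatrix}$, $S_q=\begin{pmatrix} 0 & -q^{-1}\\ 1 & 0\end{pmatrix}\in \mathrm{GL}(2,\mathbb{Z}[q,q^{-1}])$. Let $G_q=\langle R_q,S_q\rangle$, and $\mathrm{PSL}_q(2,\mathbb{Z})=G_q/\langle qE_2,-E_2\rangle$, where $E_2$ is the $2\times2$ identity matrix and $\langle qE_2,-E_2\rangle$ is a normal subgroup of $G_q$. For $\zeta\in\mathbb{C}^*$, let $G_q(\zeta)=\{M_q|_{q=\zeta}: M_q\in G_q\}\subset\mathrm{GL}(2,\mathbb{C})$, and $\mathrm{PSL}_q(2,\mathbb{Z})|_{q=\zeta}$ denotes $G_q(\zeta)/\langle \zeta E_2,-E_2\rangle$. *)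

theory Defs
  imports "HOL-Analysis.Analysis"
begin

definition Rq :: "complex \<Rightarrow> complex^2^2" where
  "Rq z = vector [vector [z, 1], vector [0, 1]]"

definition Sq :: "complex \<Rightarrow> complex^2^2" where
  "Sq z = vector [vector [0, - inverse z], vector [1, 0]]"

inductive_set gen_group :: "(complex^2^2) set \<Rightarrow> (complex^2^2) set" for A where
  one: "mat 1 \<in> gen_group A"
| mul: "M \<in> gen_group A \<Longrightarrow> X \<in> A \<Longrightarrow> X ** M \<in> gen_group A"
| mul_inv: "M \<in> gen_group A \<Longrightarrow> X \<in> A \<Longrightarrow> matrix_inv X ** M \<in> gen_group A"

definition Gq :: "complex \<Rightarrow> (complex^2^2) set" where
  "Gq z = gen_group {Rq z, Sq z}"

definition Nq :: "complex \<Rightarrow> (complex^2^2) set" where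
  "Nq z = gen_group {mat z, - mat 1}"

text \<open>The quotient PSL_q(2,Z) at q = z, as the set of cosets M N.\<close>
definition PSLq_at :: "complex \<Rightarrow> (complex^2^2) set set" where
  "PSLq_at z = (\<lambda>M. (\<lambda>N. M ** N) ` Nq z) ` Gq z"

definition primitive_root_of_unity :: "nat \<Rightarrow> complex \<Rightarrow> bool" where
  "primitive_root_of_unity n z \<longleftrightarrow> n > 0 \<and> z ^ n = 1 \<and> (\<forall>k. 0 < k \<and> k < n \<longrightarrow> z ^ k \<noteq> 1)"

end

theory Submission
  imports Defs "HOL-Computational_Algebra.Polynomial_Factorial"
begin

definition mk :: "complex \<Rightarrow> complex \<Rightarrow> complex \<Rightarrow> complex \<Rightarrow> complex^2^2" where
  "mk a b c d = vector [vector [a,b], vector [c,d]]"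

lemma mk_nth[simp]: "mk a b c d $ 1 $ 1 = a" "mk a b c d $ 1 $ 2 = b"
  "mk a b c d $ 2 $ 1 = c" "mk a b c d $ 2 $ 2 = d"
  by (simp_all add: mk_def)

lemma mk_eq_iff: "mk a b c d = mk a' b' c' d' \<longleftrightarrow> a = a' \<and> b = b' \<and> c = c' \<and> d = d'"
  by (auto simp: mk_def vec_eq_iff forall_2)

lemma mk_cases: "M = mk (M$1$1) (M$1$2) (M$2$1) (M$2$2)"
  by (simp add: vec_eq_iff forall_2)

lemma mat_mk: "mat x = mk x 0 0 x"
  by (simp add: vec_eq_iff forall_2 mat_def)

lemma mk_mult: "mk a b c d ** mk e f g h = mk (a*e+b*g) (a*f+b*h) (c*e+d*g) (c*f+d*h)"
  by (simp add: vec_eq_iff forall_2 matrix_matrix_mult_def sum_2)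

lemma mk_neg: "- mk a b c d = mk (-a) (-b) (-c) (-d)"
  by (simp add: vec_eq_iff forall_2)

lemma det_mk: "det (mk a b c d) = a*d - b*c"
  by (simp add: det_2)

lemma matrix_inv_eqI:
  fixes A B :: "'a::semiring_1^'n^'n"
  assumes "A ** B = mat 1" "B ** A = mat 1"
  shows "matrix_inv A = B"
proof -
  have ex: "\<exists>B'. A ** B' = mat 1 \<and> B' ** A = mat 1" using assms by blast
  have "A ** matrix_inv A = mat 1 \<and> matrix_inv A ** A = mat 1"
    unfolding matrix_inv_def by (rule someI_ex[OF ex])
  then have "matrix_inv A = matrix_inv A ** (A ** B)" using assms by simp
  also have "\<dots> = (matrix_inv A ** A) ** B" by (simp add: matrix_mul_assoc)
  also have "\<dots> = B" using \<open>_ \<and> _\<close> by simp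
  finally show ?thesis .
qed

lemma matrix_inv_mk:
  assumes "a*d - b*c \<noteq> 0"
  shows "matrix_inv (mk a b c d) = mk (d/(a*d-b*c)) (-b/(a*d-b*c)) (-c/(a*d-b*c)) (a/(a*d-b*c))"
proof -
  define D where "D = a*d - b*c"
  have D: "D \<noteq> 0" using assms by (simp add: D_def)
  have e: "a * d - b * c = D" "d * a - c * b = D" by (simp_all add: D_def algebra_simps)
  show ?thesis unfolding D_def[symmetric]
    by (rule matrix_inv_eqI) (simp_all add: mk_mult mat_mk mk_eq_iff times_divide_eq_right
         add_divide_distrib[symmetric] diff_divide_distrib[symmetric] algebra_simps e D)
qed

lemma Rq_mk: "Rq z = mk z 1 0 1" by (simp add: Rq_def mk_def)
lemma Sq_mk: "Sq z = mk 0 (- inverse z) 1 0" by (simp add: Sq_def mk_def)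

lemma gen_group_mult:
  assumes "A \<in> gen_group S" "B \<in> gen_group S"
  shows "A ** B \<in> gen_group S"
  using assms(1)
proof induction
  case one then show ?case using assms(2) by simp
next
  case (mul M X) then show ?case by (simp add: matrix_mul_assoc[symmetric] gen_group.mul)
next
  case (mul_inv M X) then show ?case by (simp add: matrix_mul_assoc[symmetric] gen_group.mul_inv)
qed

lemma gen_group_gen: "X \<in> S \<Longrightarrow> X \<in> gen_group S"
  using gen_group.mul[OF gen_group.one, of X S] by simp

primrec mpow :: "complex^2^2 \<Rightarrow> nat \<Rightarrow> complex^2^2" where
  "mpow X 0 = mat 1"
| "mpow X (Suc k) = X ** mpow X k"

lemma mpow_in: "X \<in> gen_group S \<Longrightarrow> mpow X k \<in> gen_group S"
  by (induction k) (auto intro: gen_group.one gen_group_mult)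

lemma mpow_add: "mpow X (j + k) = mpow X j ** mpow X k"
  by (induction j) (auto simp: matrix_mul_assoc)

lemma det_mpow: "det (mpow X k) = det X ^ k"
  by (induction k) (auto simp: det_mul)

lemma Nq_scalar:
  assumes "z \<noteq> 0" "C \<in> Nq z"
  shows "\<exists>g. C = mat g"
  using assms(2) unfolding Nq_def
proof induction
  case one then show ?case by blast
next
  case (mul M X)
  then obtain g where g: "M = mat g" by blast
  from mul.hyps(2) show ?case
  proof
    assume "X = mat z" then show ?thesis using g by (auto simp: mat_mk mk_mult)
  next
    assume "X \<in> {- mat 1}" then show ?thesis using g
      by (rule_tac x="-g" in exI) (auto simp: mat_mk mk_mult mk_neg)
  qed
next
  case (mul_inv M X)
  then obtain g where g: "M = mat g" by blast
  from mul_inv.hyps(2) show ?case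
  proof
    assume "X = mat z" then show ?thesis using g assms(1)
      by (rule_tac x="g/z" in exI) (auto simp: mat_mk mk_mult matrix_inv_mk)
  next
    assume "X \<in> {- mat 1}" then show ?thesis using g
      by (rule_tac x="-g" in exI) (auto simp: mat_mk mk_mult mk_neg matrix_inv_mk)
  qed
qed

lemma mat1_Nq: "mat 1 \<in> Nq z" unfolding Nq_def by (rule gen_group.one)

lemma cancel_right:
  fixes Y P :: "complex^2^2"
  assumes "Y ** P = mat g ** P" "det P \<noteq> 0"
  shows "Y = mat g"
proof -
  obtain a b c d where P: "P = mk a b c d" using mk_cases by blast
  define D where "D = a*d - b*c"
  have D: "D \<noteq> 0" using assms(2) by (simp add: P det_mk D_def)
  have e: "a * d - b * c = D" "d * a - c * b = D" by (simp_all add: D_def algebra_simps)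
  define Q where "Q = mk (d/D) (-b/D) (-c/D) (a/D)"
  have PQ: "P ** Q = mat 1" by (simp add: P Q_def mk_mult mat_mk mk_eq_iff times_divide_eq_right
         add_divide_distrib[symmetric] diff_divide_distrib[symmetric] algebra_simps e D)
  have "Y = Y ** (P ** Q)" by (simp add: PQ)
  also have "\<dots> = (mat g ** P) ** Q" by (simp add: matrix_mul_assoc assms(1))
  also have "\<dots> = mat g" by (simp only: matrix_mul_assoc[symmetric] PQ matrix_mul_rid)
  finally show ?thesis .
qed

lemma fin_pow:
  assumes fin: "finite (PSLq_at z)" and z: "z \<noteq> 0" and X: "X \<in> Gq z" and dX: "det X \<noteq> 0"
  shows "\<exists>d>0. \<exists>g. mpow X d = mat g"
proof -
  define f where "f k = (\<lambda>N. mpow X k ** N) ` Nq z" for k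
  have "range f \<subseteq> PSLq_at z"
    using mpow_in[of X "{Rq z, Sq z}"] X by (auto simp: f_def PSLq_at_def Gq_def)
  then have "finite (range f)" using fin finite_subset by blast
  then have "\<not> inj f" using finite_imageD infinite_UNIV_nat by blast
  then obtain j k where jk: "j \<noteq> k" "f j = f k" unfolding inj_def by blast
  have key: "\<exists>d>0. \<exists>g. mpow X d = mat g" if lt: "j < k" and eq: "f j = f k" for j k
  proof -
    have "mpow X k \<in> f k" unfolding f_def using mat1_Nq by (auto intro!: image_eqI[where x="mat 1"])
    then have "mpow X k \<in> f j" using eq by simp
    then obtain C where C: "C \<in> Nq z" "mpow X k = mpow X j ** C" by (auto simp: f_def)
    obtain g where g: "C = mat g" using Nq_scalar[OF z C(1)] by blast
    have k: "k = (k - j) + j" using lt by simp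
    have "mpow X (k - j) ** mpow X j = mpow X j ** mat g"
      using C g mpow_add[of X "k-j" j] k by simp
    also have "\<dots> = mat g ** mpow X j"
    proof -
      obtain a b c d where "mpow X j = mk a b c d" using mk_cases by blast
      then show ?thesis by (simp add: mat_mk mk_mult algebra_simps)
    qed
    finally have "mpow X (k - j) = mat g"
      by (rule cancel_right) (simp add: det_mpow dX)
    then show ?thesis using lt by (intro exI[of _ "k-j"]) auto
  qed
  show ?thesis
  proof (cases "j < k")
    case True then show ?thesis using key jk by blast
  next
    case False then show ?thesis using key[of k j] jk by auto
  qed
qed

definition ev :: "complex \<Rightarrow> int poly \<Rightarrow> complex" where
  "ev w P = poly (map_poly of_int P) w"

lemma mp_mult: "map_poly (of_int :: int \<Rightarrow> complex) (P * Q) = map_poly of_int P * map_poly of_int Q"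
  by (simp add: poly_eq_iff coeff_map_poly coeff_mult)
lemma mp_add: "map_poly (of_int :: int \<Rightarrow> complex) (P + Q) = map_poly of_int P + map_poly of_int Q"
  by (simp add: poly_eq_iff coeff_map_poly)
lemma mp_diff: "map_poly (of_int :: int \<Rightarrow> complex) (P - Q) = map_poly of_int P - map_poly of_int Q"
  by (simp add: poly_eq_iff coeff_map_poly)
lemma ev_mult[simp]: "ev w (P * Q) = ev w P * ev w Q"
  by (simp add: ev_def mp_mult)
lemma ev_add[simp]: "ev w (P + Q) = ev w P + ev w Q"
  by (simp add: ev_def mp_add)
lemma ev_diff[simp]: "ev w (P - Q) = ev w P - ev w Q"
  by (simp add: ev_def mp_diff)
lemma ev_const[simp]: "ev w [:c:] = of_int c"
  by (simp add: ev_def map_poly_pCons)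
lemma ev_smult[simp]: "ev w (smult c P) = of_int c * ev w P"
  by (simp add: ev_def map_poly_smult)
lemma ev_1[simp]: "ev w 1 = 1"
  by (simp add: ev_def)
lemma ev_monom[simp]: "ev w (monom c n) = of_int c * w ^ n"
  by (simp add: ev_def poly_monom map_poly_monom)
lemma ev_pow[simp]: "ev w (P ^ k) = ev w P ^ k"
  by (induction k) auto
lemma ev_pcompose: "ev w (pcompose g (monom 1 p)) = ev (w ^ p) g"
proof (induction g)
  case 0 then show ?case by (simp add: ev_def)
next
  case (pCons a g) then show ?case
    by (simp add: pcompose_pCons ev_def map_poly_pCons mp_add mp_mult map_poly_monom poly_monom)
qed
lemma ev_sum: "ev w (sum f A) = (\<Sum>x\<in>A. ev w (f x))"
  by (induction A rule: infinite_finite_induct) (auto simp: ev_def mp_add)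

definition mcong :: "nat \<Rightarrow> 'a::comm_ring_1 \<Rightarrow> 'a \<Rightarrow> bool" where
  "mcong p A B \<longleftrightarrow> (\<exists>W. A - B = of_nat p * W)"

lemma mcong_refl[simp]: "mcong p A A"
  unfolding mcong_def by (rule exI[of _ 0]) simp
lemma mcong_sym: "mcong p A B \<Longrightarrow> mcong p B A"
  unfolding mcong_def
proof (elim exE)
  fix W assume "A - B = of_nat p * W"
  then show "\<exists>W. B - A = of_nat p * W" by (rule_tac x="-W" in exI) (simp add: algebra_simps)
qed
lemma mcong_trans: "mcong p A B \<Longrightarrow> mcong p B C \<Longrightarrow> mcong p A C"
  unfolding mcong_def
proof (elim exE)
  fix W V assume "A - B = of_nat p * W" "B - C = of_nat p * V"
  then show "\<exists>W. A - C = of_nat p * W"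
    by (rule_tac x="W + V" in exI) (simp add: algebra_simps)
qed
lemma mcong_add: "mcong p A B \<Longrightarrow> mcong p C D \<Longrightarrow> mcong p (A + C) (B + D)"
  unfolding mcong_def
proof (elim exE)
  fix W V assume "A - B = of_nat p * W" "C - D = of_nat p * V"
  then show "\<exists>W. A + C - (B + D) = of_nat p * W"
    by (rule_tac x="W + V" in exI) (simp add: algebra_simps)
qed
lemma mcong_mult: "mcong p A B \<Longrightarrow> mcong p C D \<Longrightarrow> mcong p (A * C) (B * D)"
  unfolding mcong_def
proof (elim exE)
  fix W V assume h: "A - B = of_nat p * W" "C - D = of_nat p * V"
  have "A * C - B * D = (A - B) * C + B * (C - D)" by (simp add: algebra_simps)
  then show "\<exists>W. A * C - B * D = of_nat p * W" using h
    by (rule_tac x="W * C + B * V" in exI) (simp add: algebra_simps)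
qed
lemma mcong_pow: "mcong p A B \<Longrightarrow> mcong p (A ^ k) (B ^ k)"
  by (induction k) (auto intro: mcong_mult)
lemma mcong_zero: "mcong p (of_nat p * W) 0"
  unfolding mcong_def by auto

lemma frob:
  fixes x y :: "'a::comm_ring_1"
  assumes p: "prime p"
  shows "mcong p ((x + y) ^ p) (x ^ p + y ^ p)"
proof -
  obtain q where q: "p = Suc (Suc q)" using prime_ge_2_nat[OF p] by (metis add_2_eq_Suc le_Suc_ex)
  define f where "f k = of_nat (p choose k) * x ^ k * y ^ (p - k)" for k
  have "(x + y) ^ p = (\<Sum>k\<le>p. f k)" unfolding f_def by (rule binomial_ring)
  also have "\<dots> = (\<Sum>k\<le>Suc q. f k) + f p" by (simp add: q)
  also have "(\<Sum>k\<le>Suc q. f k) = f 0 + (\<Sum>k\<le>q. f (Suc k))" by (rule sum.atMost_Suc_shift)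
  also have "f p = x ^ p" by (simp add: f_def)
  also have "f 0 = y ^ p" by (simp add: f_def)
  finally have e: "(x + y) ^ p = x ^ p + y ^ p + (\<Sum>k\<le>q. f (Suc k))" by (simp add: add_ac)
  have "\<forall>k\<le>q. f (Suc k) = of_nat p * (of_nat ((p choose Suc k) div p) * x ^ Suc k * y ^ (p - Suc k))"
  proof (intro allI impI)
    fix k assume k: "k \<le> q"
    have "p dvd (p choose Suc k)" by (rule dvd_choose_prime) (use k q p in auto)
    then have "of_nat (p choose Suc k) = (of_nat p * of_nat ((p choose Suc k) div p) :: 'a)"
      by (metis dvd_mult_div_cancel of_nat_mult)
    then show "f (Suc k) = of_nat p * (of_nat ((p choose Suc k) div p) * x ^ Suc k * y ^ (p - Suc k))"
      by (simp add: f_def mult_ac)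
  qed
  then have "(\<Sum>k\<le>q. f (Suc k)) = of_nat p * (\<Sum>k\<le>q. of_nat ((p choose Suc k) div p) * x ^ Suc k * y ^ (p - Suc k))"
    by (simp add: sum_distrib_left)
  then show ?thesis unfolding mcong_def using e by (metis add_diff_cancel_left')
qed

lemma fermat_int:
  fixes c :: int
  assumes p: "prime p"
  shows "mcong p (c ^ p) c"
proof (induction c rule: int_induct[where k=0])
  case base
  have z: "(0::int) ^ p = 0" using prime_gt_0_nat[OF p] by (simp add: power_0_left)
  show ?case by (subst z) (rule mcong_refl)
next
  case (step1 i)
  have "mcong p ((i + 1) ^ p) (i ^ p + 1 ^ p)" by (rule frob[OF p])
  moreover have "mcong p (i ^ p + 1 ^ p) (i + 1)" using step1 by (auto intro: mcong_add)
  ultimately show ?case by (rule mcong_trans)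
next
  case (step2 i)
  have "mcong p (((i - 1) + 1) ^ p) ((i - 1) ^ p + 1 ^ p)" by (rule frob[OF p])
  then have a: "mcong p (i ^ p) ((i - 1) ^ p + 1)" by simp
  have "mcong p ((i - 1) ^ p + 1 + (-1)) (i ^ p + (-1))"
    by (rule mcong_add[OF mcong_sym[OF a]]) simp
  then have "mcong p ((i - 1) ^ p) (i ^ p - 1)" by simp
  moreover have "mcong p (i ^ p - 1) (i - 1)"
    using mcong_add[OF step2(2) mcong_refl[of p "-1"]] by simp
  ultimately show ?case by (rule mcong_trans)
qed

lemma mcong_const:
  assumes "mcong p a b" shows "mcong p [:a:] [:b:]"
proof -
  obtain W where "a - b = of_nat p * W" using assms unfolding mcong_def by blast
  then have "[:a:] - [:b:] = of_nat p * [:W:]" by (simp add: of_nat_poly)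
  then show ?thesis unfolding mcong_def by blast
qed

lemma frob_comp:
  fixes g :: "int poly"
  assumes p: "prime p"
  shows "mcong p (pcompose g (monom 1 p)) (g ^ p)"
proof (induction g)
  case 0
  have z: "(0::int poly) ^ p = 0" using prime_gt_0_nat[OF p] by (simp add: power_0_left)
  show ?case by (subst z) simp
next
  case (pCons c g)
  have xp: "monom (1::int) (Suc 0) ^ p = monom 1 p" by (simp add: monom_power)
  have e: "pCons c g = [:c:] + monom 1 1 * g" by (simp add: monom_Suc)
  have "mcong p ((pCons c g) ^ p) ([:c:] ^ p + (monom 1 1 * g) ^ p)"
    unfolding e by (rule frob[OF p])
  then have a: "mcong p ((pCons c g) ^ p) ([:c ^ p:] + monom 1 p * g ^ p)"
    by (simp add: power_mult_distrib xp poly_const_pow)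
  have b: "mcong p ([:c ^ p:] + monom 1 p * g ^ p) ([:c:] + monom 1 p * pcompose g (monom 1 p))"
    by (intro mcong_add mcong_const fermat_int[OF p] mcong_mult mcong_refl mcong_sym[OF pCons.IH])
  show ?case using mcong_trans[OF a b] by (simp add: pcompose_pCons mcong_sym)
qed

lemma coeff_ofnat_mult: "coeff (of_nat p * W :: int poly) i = int p * coeff W i"
  by (simp add: of_nat_poly)

lemma fr3:
  fixes f Q :: "int poly"
  assumes mon: "lead_coeff f = 1" and deg: "degree f \<ge> 1"
    and cong: "mcong p (f * Q) [:c:]"
  shows "int p dvd c"
proof -
  have "\<forall>Q. (\<forall>i. int p dvd coeff (f * Q - [:c:]) i) \<longrightarrow> degree Q = m \<longrightarrow> int p dvd c" for m
  proof (induction m rule: less_induct)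
    case (less m)
    show ?case
    proof (intro allI impI)
      fix Q :: "int poly"
      assume h: "\<forall>i. int p dvd coeff (f * Q - [:c:]) i" and dQ: "degree Q = m"
      show "int p dvd c"
      proof (cases "int p dvd lead_coeff Q")
        case False
        then have Q0: "Q \<noteq> 0" by auto
        have "coeff (f * Q) (degree f + degree Q) = lead_coeff Q"
          using mon by (simp add: coeff_mult_degree_sum)
        moreover have "coeff [:c:] (degree f + degree Q) = 0" using deg by (simp add: coeff_pCons split: nat.split)
        ultimately have "int p dvd lead_coeff Q" using h[rule_format, of "degree f + degree Q"] by simp
        with False show ?thesis by blast
      next
        case True
        then obtain l where l: "lead_coeff Q = int p * l" by blast
        define Q' where "Q' = Q - monom (lead_coeff Q) (degree Q)"
        have m: "monom (lead_coeff Q) (degree Q) = smult (int p) (monom l (degree Q))"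
          by (simp add: l smult_monom)
        have op: "(of_nat p :: int poly) * X = smult (int p) X" for X
          by (simp add: of_nat_poly)
        have fm: "f * Q - [:c:] = (f * Q' - [:c:]) + of_nat p * (f * monom l (degree Q))"
          unfolding op Q'_def m by (simp add: algebra_simps mult_smult_right)
        have h': "\<forall>i. int p dvd coeff (f * Q' - [:c:]) i"
        proof
          fix i
          have "int p dvd coeff (f * Q - [:c:]) i" using h by blast
          then have "int p dvd coeff (f * Q' - [:c:]) i + int p * coeff (f * monom l (degree Q)) i"
            unfolding fm by (simp add: coeff_ofnat_mult)
          then show "int p dvd coeff (f * Q' - [:c:]) i"
            by (simp add: dvd_add_left_iff)
        qed
        show ?thesis
        proof (cases "m = 0")
          case True
          then obtain a where Qa: "Q = [:a:]" using dQ by (metis degree_eq_zeroE)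
          then have "int p dvd a" using l by auto
          then have A: "int p dvd coeff f 0 * a" by simp
          have B: "int p dvd coeff f 0 * a - c" using h[rule_format, of 0] Qa by (simp add: mult.commute)
          from dvd_diff[OF A B] show ?thesis by simp
        next
          case False
          have "degree Q' < m \<or> Q' = 0"
          proof (cases "Q' = 0")
            case False
            have "degree Q' \<le> degree Q" unfolding Q'_def by (rule degree_diff_le) (auto simp: degree_monom_le)
            moreover have "coeff Q' (degree Q) = 0" by (simp add: Q'_def)
            ultimately have "degree Q' < degree Q" using False \<open>m \<noteq> 0\<close> dQ
              by (metis le_neq_implies_less leading_coeff_0_iff)
            then show ?thesis using dQ by simp
          qed simp
          then show ?thesis
          proof
            assume "degree Q' < m"
            then show ?thesis using less.IH h' by blast
          next
            assume "Q' = 0"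
            then show ?thesis using h'[rule_format, of 0] by simp
          qed
        qed
      qed
    qed
  qed
  moreover obtain W where W: "f * Q - [:c:] = of_nat p * W" using cong unfolding mcong_def by blast
  have "\<forall>i. int p dvd coeff (f * Q - [:c:]) i" unfolding W coeff_ofnat_mult by simp
  ultimately show ?thesis by blast
qed

lemma ev_0[simp]: "ev w 0 = 0" by (simp add: ev_def)
lemma ev_uminus[simp]: "ev w (- P) = - ev w P"
  using ev_diff[of w 0 P] by simp

lemma minpoly_exists:
  fixes w :: complex
  assumes wn: "w ^ n = 1" and n: "n > 0"
  shows "\<exists>f g. lead_coeff f = 1 \<and> f * g = monom 1 n - 1 \<and> ev w f = 0 \<and> (\<forall>P. ev w P = 0 \<longrightarrow> f dvd P)"
proof -
  define F :: "int poly" where "F = monom 1 n - 1"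
  have "coeff F n = 1" using n by (simp add: F_def)
  then have F0: "F \<noteq> 0" by auto
  have Fw: "ev w F = 0" using wn by (simp add: F_def)
  define d where "d = (LEAST k. \<exists>P. P \<noteq> 0 \<and> ev w P = 0 \<and> degree P = k)"
  have ex: "\<exists>k P. P \<noteq> 0 \<and> ev w P = 0 \<and> degree P = k" using F0 Fw by blast
  obtain f0 where f0: "f0 \<noteq> 0" "ev w f0 = 0" "degree f0 = d"
    using LeastI_ex[OF ex] unfolding d_def by blast
  have dmin: "d \<le> degree P" if "P \<noteq> 0" "ev w P = 0" for P
    unfolding d_def by (rule Least_le) (use that in blast)
  define f1 where "f1 = primitive_part f0"
  have f0e: "f0 = smult (content f0) f1" unfolding f1_def by (simp add: content_times_primitive_part)
  have c0: "content f0 \<noteq> 0" using f0(1) by simp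
  have f1w: "ev w f1 = 0" using f0(2) c0 by (subst (asm) f0e) simp
  have f1d: "degree f1 = d" using f0(3) by (simp add: f1_def degree_primitive_part)
  have f1c: "content f1 = 1" using f0(1) by (simp add: f1_def content_primitive_part)
  have f1nz: "f1 \<noteq> 0" using f1c by auto
  have div: "f1 dvd P" if Pw: "ev w P = 0" for P
  proof -
    obtain q r where qr: "pseudo_divmod P f1 = (q, r)" by (cases "pseudo_divmod P f1") auto
    define c where "c = coeff f1 (degree f1) ^ (Suc (degree P) - degree f1)"
    have eq: "smult c P = f1 * q + r" and rd: "r = 0 \<or> degree r < degree f1"
      using pseudo_divmod[OF f1nz qr] by (simp_all add: c_def)
    have "ev w r = 0" using arg_cong[OF eq, of "ev w"] Pw f1w by simp
    then have r0: "r = 0" using rd dmin[of r] f1d by fastforce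
    have cnz: "c \<noteq> 0" using f1nz by (simp add: c_def)
    have "f1 dvd smult c P" using eq r0 by simp
    then have "fract_poly f1 dvd fract_poly (smult c P)" by (rule fract_poly_dvd)
    then have "fract_poly f1 dvd smult (to_fract c) (fract_poly P)" by (simp add: fract_poly_smult)
    then have "fract_poly f1 dvd fract_poly P" by (rule dvd_smult_cancel) (simp add: cnz)
    then show ?thesis using f1c by (rule fract_poly_dvdD)
  qed
  obtain g1 where g1: "F = f1 * g1" using div[OF Fw] by (elim dvdE)
  have "degree F \<le> n" unfolding F_def by (rule degree_diff_le) (auto simp: degree_monom_le)
  moreover have "n \<le> degree F" using \<open>coeff F n = 1\<close> by (intro le_degree) simp
  ultimately have "degree F = n" by simp
  then have "lead_coeff F = 1" using \<open>coeff F n = 1\<close> by simp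
  then have "lead_coeff f1 * lead_coeff g1 = 1" using g1 by (simp add: lead_coeff_mult)
  then have "lead_coeff f1 = 1 \<or> lead_coeff f1 = -1" by (simp add: zmult_eq_1_iff) blast
  then show ?thesis
  proof
    assume "lead_coeff f1 = 1"
    then show ?thesis using g1 f1w div unfolding F_def by (intro exI[of _ f1] exI[of _ g1]) auto
  next
    assume l: "lead_coeff f1 = -1"
    show ?thesis
      by (rule exI[of _ "-f1"], rule exI[of _ "-g1"]) (use l g1 f1w div in \<open>auto simp: F_def\<close>)
  qed
qed

lemma dedekind:
  fixes f g :: "int poly" and w :: complex
  assumes mon: "lead_coeff f = 1" and fg: "f * g = monom 1 n - 1" and n: "n > 0"
    and root: "ev w f = 0" and minl: "\<And>P. ev w P = 0 \<Longrightarrow> f dvd P"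
    and p: "prime p" and pn: "\<not> p dvd n" and wn: "w ^ n = 1"
  shows "ev (w ^ p) f = 0"
proof (rule ccontr)
  assume nz: "ev (w ^ p) f \<noteq> 0"
  have "ev (w ^ p) (f * g) = (w ^ n) ^ p - 1" unfolding fg by (simp add: power_mult[symmetric] mult.commute)
  then have "ev (w ^ p) f * ev (w ^ p) g = 0" using wn by simp
  then have g0: "ev (w ^ p) g = 0" using nz by simp
  define h where "h = pcompose g (monom 1 p)"
  have "ev w h = 0" by (simp add: h_def ev_pcompose g0)
  then obtain u where hu: "h = f * u" using minl by (blast elim: dvdE)
  have c1: "mcong p (g ^ p) h" unfolding h_def by (rule mcong_sym[OF frob_comp[OF p]])
  have degf: "degree f \<ge> 1"
  proof (rule ccontr)
    assume "\<not> 1 \<le> degree f"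
    then have "degree f = 0" by simp
    then have "f = [:coeff f 0:]" by (simp add: degree_0_id)
    also have "coeff f 0 = 1" using mon \<open>degree f = 0\<close> by simp
    finally have "f = [:1:]" .
    then show False using root by simp
  qed
  define A where "A = monom 1 1 * pderiv f"
  define B where "B = monom 1 1 * pderiv g - smult (int n) g"
  have idn: "[:int n:] = g * A + f * B"
  proof -
    have d1: "pderiv (monom (1::int) n - 1) = monom (int n) (n - 1)"
      by (simp add: pderiv_diff pderiv_monom pderiv_1)
    have d2: "monom (1::int) 1 * monom (int n) (n - 1) = monom (int n) n"
      using n by (simp add: mult_monom)
    have d3: "smult (int n) (monom (1::int) n - 1) = monom (int n) n - [:int n:]"
      by (simp add: smult_monom smult_diff_right)
    have "monom 1 1 * pderiv (f * g) - smult (int n) (f * g) = [:int n:]"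
      unfolding fg d1 d2 d3 by simp
    moreover have "monom 1 1 * pderiv (f * g) - smult (int n) (f * g) = g * A + f * B"
      unfolding A_def B_def pderiv_mult by (simp add: algebra_simps mult_smult_right)
    ultimately show ?thesis by simp
  qed
  have m1: "mcong p ([:int n:] ^ p) ((g * A) ^ p + (f * B) ^ p)"
    unfolding idn by (rule frob[OF p])
  have m2: "mcong p ((g * A) ^ p + (f * B) ^ p) (h * A ^ p + (f * B) ^ p)"
    by (simp only: power_mult_distrib) (intro mcong_add mcong_mult c1 mcong_refl)
  obtain p' where p': "p = Suc p'" using prime_gt_0_nat[OF p] by (metis gr0_implies_Suc)
  have e3: "h * A ^ p + (f * B) ^ p = f * (u * A ^ p + f ^ p' * B ^ p)"
    unfolding hu by (simp add: p' algebra_simps power_mult_distrib)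
  have "mcong p (f * (u * A ^ p + f ^ p' * B ^ p)) [:int n ^ p:]"
    using mcong_sym[OF mcong_trans[OF m1 m2]] unfolding e3 by (simp add: poly_const_pow)
  then have "int p dvd int n ^ p" by (rule fr3[OF mon degf])
  then have "p dvd n ^ p" by (metis of_nat_dvd_iff of_nat_power)
  then have "p dvd n" using p by (rule prime_dvd_power_nat[rotated])
  then show False using pn by simp
qed

lemma transfer_prime:
  fixes w :: complex
  assumes wn: "w ^ n = 1" and n: "n > 0" and p: "prime p" and pn: "\<not> p dvd n"
    and P: "ev w P = 0"
  shows "ev (w ^ p) P = 0"
proof -
  obtain f g where fg: "lead_coeff f = 1" "f * g = monom 1 n - 1" "ev w f = 0"
    "\<forall>P. ev w P = 0 \<longrightarrow> f dvd P" using minpoly_exists[OF wn n] by blast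
  have "ev (w ^ p) f = 0" by (rule dedekind[OF fg(1,2) n fg(3) _ p pn wn]) (use fg(4) in blast)
  moreover obtain Q where "P = f * Q" using fg(4) P by (blast elim: dvdE)
  ultimately show ?thesis by simp
qed

lemma transfer:
  fixes w :: complex
  assumes wn: "w ^ n = 1" and n: "n > 0" and m: "m > 0" "coprime m n"
    and P: "ev w P = 0"
  shows "ev (w ^ m) P = 0"
  using m
proof (induction m rule: less_induct)
  case (less m)
  show ?case
  proof (cases "m = 1")
    case True then show ?thesis using P by simp
  next
    case False
    then obtain p where p: "prime p" "p dvd m" using prime_factor_nat by blast
    then obtain m' where m': "m = p * m'" by (elim dvdE)
    have m'pos: "m' > 0" using less.prems m' by (cases m') auto
    have m'lt: "m' < m" using m' prime_gt_1_nat[OF p(1)] m'pos by simp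
    have cop: "coprime m' n" using less.prems(2) m' by simp
    have pn: "\<not> p dvd n"
    proof
      assume "p dvd n"
      then have "p = 1" using coprime_common_divisor_nat[OF less.prems(2) p(2)] by simp
      then show False using p(1) by simp
    qed
    have IH: "ev (w ^ m') P = 0" using less.IH[OF m'lt m'pos cop] .
    have wn': "(w ^ m') ^ n = 1" using wn by (metis power_mult power_mult_distrib power_one mult.commute)
    have "ev ((w ^ m') ^ p) P = 0" by (rule transfer_prime[OF wn' n p(1) pn IH])
    then show ?thesis using m' by (simp add: power_mult mult.commute)
  qed
qed

fun chs :: "'a::comm_ring_1 \<Rightarrow> 'a \<Rightarrow> nat \<Rightarrow> 'a" where
  "chs t d 0 = 0"
| "chs t d (Suc 0) = 1"
| "chs t d (Suc (Suc k)) = t * chs t d (Suc k) - d * chs t d k"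

lemma ev_chs: "ev w (chs T D k) = chs (ev w T) (ev w D) k"
  by (induction T D k rule: chs.induct) auto

lemma chs_scale: "chs (v * s) (v ^ 2) k * v = v ^ k * chs s 1 k"
  by (induction "v * s" "v ^ 2" k rule: chs.induct) (auto simp: algebra_simps power2_eq_square)

lemma chs_of_real: "chs (complex_of_real s) 1 k = complex_of_real (chs s 1 k)"
  by (induction "complex_of_real s" "1::complex" k rule: chs.induct) auto

lemma chs_ge:
  fixes s :: real assumes "s \<ge> 2"
  shows "chs s 1 (Suc k) - chs s 1 k \<ge> 1 \<and> chs s 1 k \<ge> real k"
proof (induction k)
  case 0 then show ?case by simp
next
  case (Suc k)
  have "chs s 1 (Suc (Suc k)) - chs s 1 (Suc k) = (s - 2) * chs s 1 (Suc k) + (chs s 1 (Suc k) - chs s 1 k)"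
    by (simp add: algebra_simps)
  moreover have "(s - 2) * chs s 1 (Suc k) \<ge> 0" using Suc assms by simp
  ultimately show ?case using Suc by simp
qed

lemma sigma_ge:
  fixes n :: nat assumes n: "n \<ge> 6"
  shows "sin (real (n div 2) * (pi / n)) \<ge> 2 * sin (pi / n)"
proof (cases "n = 6")
  case True
  have "real (n div 2) * (pi / n) = pi / 2" using True by simp
  then show ?thesis using True by (simp add: sin_30)
next
  case False
  then have n7: "n \<ge> 7" using n by simp
  define y where "y = pi / (2 * n)"
  have y0: "0 \<le> y" by (simp add: y_def)
  have "y \<le> pi / 14" unfolding y_def using n7 by (intro divide_left_mono) auto
  also have "pi / 14 < 1 / 4" using pi_approx by simp
  finally have y4: "y < 1/4" .
  have sy: "sin y \<le> y" by (rule sin_x_le_x[OF y0])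
  have cy: "cos y \<ge> 0" using y0 \<open>y \<le> pi/14\<close> by (intro cos_ge_zero) auto
  have "2 * sin (pi / n) = 2 * sin (2 * y)" by (simp add: y_def)
  also have "\<dots> = (4 * sin y) * cos y" by (simp add: sin_double)
  also have "\<dots> \<le> 1 * cos y" using sy y4 cy by (intro mult_right_mono) auto
  also have "\<dots> = sin (pi / 2 - y)" by (simp add: cos_sin_eq)
  also have "\<dots> \<le> sin (real (n div 2) * (pi / n))"
  proof (rule sin_monotone_2pi_le)
    show "- (pi / 2) \<le> pi / 2 - y" using \<open>y \<le> pi/14\<close> pi_gt3 by simp
    have "real n \<le> 2 * real (n div 2) + 1" by linarith
    then have "pi * (real n - 1) \<le> pi * (2 * real (n div 2))" by (intro mult_left_mono) auto
    then have "pi * (real n - 1) / (2 * n) \<le> pi * (2 * real (n div 2)) / (2 * n)"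
      by (rule divide_right_mono) auto
    moreover have "pi / 2 - y = pi * (real n - 1) / (2 * n)" using n7 by (simp add: y_def field_simps)
    moreover have "real (n div 2) * (pi / n) = pi * (2 * real (n div 2)) / (2 * n)" using n7 by (simp add: field_simps)
    ultimately have "pi / 2 - y \<le> real (n div 2) * (pi / n)" by (simp add: mult.commute)
    then show "pi / 2 - y \<le> real (n div 2) * (pi / real n)" .
    have "2 * real (n div 2) \<le> real n" by linarith
    then show "real (n div 2) * (pi / real n) \<le> pi / 2" using n7 by (simp add: field_simps)
  qed
  finally show ?thesis .
qed

lemma cis_diff_neg: "cis y - cis (- y) = 2 * \<i> * complex_of_real (sin y)"
  by (simp add: complex_eq_iff)

lemma xi_trace:
  fixes n :: nat and x :: real assumes n: "n \<ge> 6" and x: "x = pi / n"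
  shows "cis (2 * x) * (\<Sum>i<n div 2. cis (2 * x) ^ i)
       = cis (real (n div 2 + 1) * x) * complex_of_real (sin (real (n div 2) * x) / sin x)"
proof -
  define a where "a = n div 2"
  define xi where "xi = cis (2 * x)"
  define S where "S = (\<Sum>i<a. xi ^ i)"
  have h6: "pi / n \<le> pi / 6" using n by (intro divide_left_mono) auto
  have "pi / 6 < pi" using pi_gt_zero by simp
  then have x1: "x < pi" using h6 unfolding x by linarith
  have x0: "0 < x" "x < pi" using n x1 unfolding x by auto
  have sx: "sin x \<noteq> 0" using sin_gt_zero[OF x0] by simp
  have F1: "xi ^ a - 1 = (xi - 1) * S" unfolding S_def by (rule power_diff_1_eq)
  have F2: "xi - 1 = cis x * (2 * \<i> * complex_of_real (sin x))"
    unfolding cis_diff_neg[symmetric] xi_def by (simp add: right_diff_distrib cis_mult)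
  have dm: "cis (2 * x) ^ a = cis (real a * (2 * x))" by (rule Complex.DeMoivre)
  have F3: "xi ^ a - 1 = cis (a * x) * (2 * \<i> * complex_of_real (sin (a * x)))"
    unfolding cis_diff_neg[symmetric] xi_def dm by (simp add: right_diff_distrib cis_mult algebra_simps)
  have nz: "xi - 1 \<noteq> 0" using sx by (simp add: F2)
  have "(xi - 1) * (xi * S) = xi * (xi ^ a - 1)" by (simp add: F1 algebra_simps)
  also have "\<dots> = xi * (cis (a * x) * (2 * \<i> * complex_of_real (sin (a * x))))"
    by (simp only: F3)
  also have "\<dots> = cis (2 * x + a * x) * (2 * \<i> * complex_of_real (sin (a * x)))"
    by (simp only: xi_def mult.assoc[symmetric] cis_mult)
  also have "\<dots> = (cis x * cis (real (a + 1) * x)) * (2 * \<i> * complex_of_real (sin x)) * complex_of_real (sin (a * x) / sin x)"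
  proof -
    have "cis x * cis (real (a + 1) * x) = cis (2 * x + a * x)" by (simp add: cis_mult algebra_simps)
    moreover have "complex_of_real (sin x) * complex_of_real (sin (a * x) / sin x) = complex_of_real (sin (a * x))"
    proof -
      have "sin x * (sin (a * x) / sin x) = sin (a * x)" using sx by simp
      then show ?thesis by (metis of_real_mult)
    qed
    ultimately show ?thesis using sx by (simp add: algebra_simps)
  qed
  also have "\<dots> = (xi - 1) * (cis (real (a + 1) * x) * complex_of_real (sin (a * x) / sin x))"
    by (simp add: F2 algebra_simps)
  finally have eq: "(xi - 1) * (xi * S) = (xi - 1) * (cis (real (a + 1) * x) * complex_of_real (sin (a * x) / sin x))" .
  have "xi * S = cis (real (a + 1) * x) * complex_of_real (sin (a * x) / sin x)"
    using eq mult_left_cancel[OF nz] by blast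
  then show ?thesis by (simp add: a_def xi_def S_def)
qed

lemma chs_xi_nz:
  fixes n d :: nat assumes n: "n \<ge> 6" and d: "d > 0"
  shows "chs (cis (2 * (pi / n)) * (\<Sum>i<n div 2. cis (2 * (pi / n)) ^ i)) (cis (2 * (pi / n)) ^ (n div 2 + 1)) d \<noteq> 0"
proof -
  define x where "x = pi / n"
  define a where "a = n div 2"
  define v where "v = cis (real (a + 1) * x)"
  define sg where "sg = sin (real a * x) / sin x"
  have "pi / n \<le> pi / 6" using n by (intro divide_left_mono) auto
  moreover have "pi / 6 < pi" using pi_gt_zero by simp
  ultimately have "x < pi" unfolding x_def by linarith
  moreover have "0 < x" using n by (simp add: x_def)
  ultimately have sx: "sin x > 0" by (intro sin_gt_zero)
  have "sin (real a * x) \<ge> 2 * sin x" using sigma_ge[OF n] by (simp add: a_def x_def)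
  then have sg2: "sg \<ge> 2" using sx by (simp add: sg_def le_divide_eq)
  have t: "cis (2 * x) * (\<Sum>i<a. cis (2 * x) ^ i) = v * complex_of_real sg"
    using xi_trace[OF n x_def] by (simp add: a_def v_def sg_def)
  have dl: "cis (2 * x) ^ (a + 1) = v ^ 2"
  proof -
    have "cis (2 * x) ^ (a + 1) = cis (real (a + 1) * (2 * x))" by (rule Complex.DeMoivre)
    moreover have "v ^ 2 = cis (real 2 * (real (a + 1) * x))" unfolding v_def by (rule Complex.DeMoivre)
    ultimately show ?thesis by (simp add: algebra_simps)
  qed
  have "chs (v * complex_of_real sg) (v ^ 2) d * v = v ^ d * complex_of_real (chs sg 1 d)"
    by (simp add: chs_scale chs_of_real)
  moreover have "chs sg 1 d \<ge> real d" using chs_ge[OF sg2] by blast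
  then have "chs sg 1 d \<noteq> 0" using d by auto
  moreover have "v \<noteq> 0" by (simp add: v_def)
  ultimately have "chs (v * complex_of_real sg) (v ^ 2) d \<noteq> 0" by auto
  then show ?thesis using t dl by (simp add: x_def a_def)
qed

lemma mpow_R: "mpow (Rq z) k = mk (z ^ k) (\<Sum>i<k. z ^ i) 0 1"
proof (induction k)
  case 0 then show ?case by (simp add: mat_mk)
next
  case (Suc k)
  have "(\<Sum>i<Suc k. z ^ i) = 1 + z * (\<Sum>i<k. z ^ i)"
    unfolding sum.lessThan_Suc_shift by (simp add: sum_distrib_left)
  then show ?case using Suc by (simp add: Rq_mk mk_mult mk_eq_iff add_ac)
qed

lemma mat_comm:
  fixes A :: "complex^2^2"
  shows "mat c ** A = A ** mat c"
proof -
  obtain a b d e where "A = mk a b d e" using mk_cases by blast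
  then show ?thesis by (simp add: mat_mk mk_mult algebra_simps)
qed

lemma mat_mat: "mat a ** mat b = (mat (a * b) :: complex^2^2)"
  by (simp add: mat_mk mk_mult)

lemma mpow_scal: "mpow (mat c ** X) k = mat (c ^ k) ** mpow X k"
proof (induction k)
  case 0 then show ?case by (simp add: mat_mat)
next
  case (Suc k)
  have "mpow (mat c ** X) (Suc k) = mat c ** X ** (mat (c ^ k) ** mpow X k)" using Suc by simp
  also have "\<dots> = mat c ** (mat (c ^ k) ** (X ** mpow X k))"
    by (simp add: matrix_mul_assoc mat_comm[of "c ^ k" X])
  also have "\<dots> = mat (c ^ Suc k) ** mpow X (Suc k)"
    by (simp add: matrix_mul_assoc mat_mat)
  finally show ?case .
qed

lemma cayley_hamilton:
  "mpow (mk p q r s) (Suc k) =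
     mk (chs (p + s) (p * s - q * r) (Suc k) * p - (p * s - q * r) * chs (p + s) (p * s - q * r) k)
        (chs (p + s) (p * s - q * r) (Suc k) * q)
        (chs (p + s) (p * s - q * r) (Suc k) * r)
        (chs (p + s) (p * s - q * r) (Suc k) * s - (p * s - q * r) * chs (p + s) (p * s - q * r) k)"
proof (induction k)
  case 0 then show ?case by (simp add: mat_mk mk_mult)
next
  case (Suc k)
  show ?case
    by (subst mpow.simps(2), subst Suc) (simp add: mk_mult mk_eq_iff algebra_simps)
qed

lemma step1:
  assumes fin: "finite (PSLq_at z)" and z: "z \<noteq> 0"
  shows "\<exists>d>0. z ^ d = 1" "z \<noteq> 1"
proof -
  have RG: "Rq z \<in> Gq z" unfolding Gq_def by (rule gen_group_gen) simp
  have "det (Rq z) \<noteq> 0" using z by (simp add: Rq_mk det_mk)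
  then obtain d g where d: "d > 0" "mpow (Rq z) d = mat g" using fin_pow[OF fin z RG] by blast
  then have e: "z ^ d = g" "(\<Sum>i<d. z ^ i) = 0" "1 = g" by (simp_all add: mpow_R mat_mk mk_eq_iff)
  show "\<exists>d>0. z ^ d = 1" using d e by auto
  show "z \<noteq> 1"
  proof
    assume "z = 1" then show False using e(2) d by simp
  qed
qed

lemma root_to_xi:
  fixes z :: complex
  assumes prim: "primitive_root_of_unity n z" and n: "n \<ge> 6"
  shows "\<exists>m>0. coprime m n \<and> z ^ m = cis (2 * (pi / n))"
proof -
  have n0: "n > 0" using n by simp
  have zn: "z ^ n = 1" and pr: "\<And>k. 0 < k \<Longrightarrow> k < n \<Longrightarrow> z ^ k \<noteq> 1"
    using prim by (auto simp: primitive_root_of_unity_def)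
  have "z \<in> (\<lambda>k. cis (2 * pi * real k / real n)) ` {..<n}"
    using Complex.bij_betw_roots_unity[OF n0] zn unfolding bij_betw_def by auto
  then obtain k where k: "k < n" "z = cis (2 * pi * real k / real n)" by auto
  have zpow: "z ^ j = cis (2 * pi * (real k * real j) / real n)" for j
    unfolding k(2) Complex.DeMoivre by (simp add: algebra_simps)
  have cop: "coprime k n"
  proof (rule ccontr)
    assume nc: "\<not> coprime k n"
    define g where "g = gcd k n"
    have g1: "g \<noteq> 1" using nc by (simp add: g_def coprime_iff_gcd_eq_1)
    have g0: "g > 0" using n0 by (simp add: g_def)
    obtain k' where k': "k = g * k'" unfolding g_def by (meson gcd_dvd1 dvdE)
    obtain n' where n': "n = g * n'" unfolding g_def by (meson gcd_dvd2 dvdE)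
    have n'0: "n' > 0" using n0 n' by (cases n') auto
    have n'lt: "n' < n" using g0 g1 n' n'0 by (cases g) auto
    have "z ^ n' = cis (2 * pi * (real k * real n') / real n)" by (rule zpow)
    also have "2 * pi * (real k * real n') / real n = 2 * pi * real k'"
      using g0 n'0 by (simp add: k' n' field_simps)
    also have "cis (2 * pi * real k') = 1" by (rule cis_multiple_2pi) simp
    finally show False using pr[OF n'0 n'lt] by simp
  qed
  have k0: "k \<noteq> 0"
  proof
    assume "k = 0" then show False using cop n by simp
  qed
  obtain m y where my: "k * m = n * y + gcd k n" using bezout_nat[OF k0] by blast
  then have my1: "k * m = n * y + 1" using cop by (simp add: coprime_iff_gcd_eq_1)
  have m0: "m > 0" using my1 by (cases m) auto
  have copm: "coprime m n"
  proof (rule coprimeI)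
    fix c assume c: "c dvd m" "c dvd n"
    then have "c dvd k * m" "c dvd n * y" by auto
    then have "c dvd 1" using my1 by (metis dvd_add_right_iff)
    then show "is_unit c" by simp
  qed
  have "z ^ m = cis (2 * pi * (real k * real m) / real n)" by (rule zpow)
  also have "real k * real m = real n * real y + 1" using my1 by (metis of_nat_1 of_nat_add of_nat_mult)
  also have "2 * pi * (real n * real y + 1) / real n = 2 * pi * real y + 2 * (pi / n)"
    using n0 by (simp add: field_simps)
  also have "cis (2 * pi * real y + 2 * (pi / n)) = cis (2 * (pi / n))"
    by (simp add: cis_mult[symmetric] cis_multiple_2pi)
  finally show ?thesis using m0 copm by blast
qed

lemma not_ge6:
  assumes fin: "finite (PSLq_at z)" and z: "z \<noteq> 0"
    and prim: "primitive_root_of_unity n z" and n: "n \<ge> 6"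
  shows False
proof -
  define a where "a = n div 2"
  define s where "s = (\<Sum>i<a. z ^ i)"
  define X where "X = mpow (Rq z) a ** Sq z"
  have RG: "Rq z \<in> Gq z" unfolding Gq_def by (rule gen_group_gen) simp
  have SG: "Sq z \<in> Gq z" unfolding Gq_def by (rule gen_group_gen) simp
  have XG: "X \<in> Gq z" unfolding X_def using RG SG unfolding Gq_def by (intro gen_group_mult mpow_in)
  have Xe: "X = mk s (- (z ^ a * inverse z)) 1 0"
    by (simp add: X_def mpow_R Sq_mk mk_mult s_def)
  have "det X \<noteq> 0" using z by (simp add: Xe det_mk)
  then obtain d g where d: "d > 0" "mpow X d = mat g" using fin_pow[OF fin z XG] by blast
  have Ye: "mat z ** X = mk (z * s) (- (z ^ a)) z 0"
    using z by (simp add: Xe mat_mk mk_mult mk_eq_iff power_Suc field_simps)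
  have "mpow (mk (z * s) (- (z ^ a)) z 0) d = mat (z ^ d * g)"
    unfolding Ye[symmetric] mpow_scal d(2) mat_mat ..
  moreover obtain d' where d': "d = Suc d'" using d(1) by (cases d) auto
  ultimately have "chs (z * s + 0) (z * s * 0 - - (z ^ a) * z) d * (- (z ^ a)) = 0"
    using cayley_hamilton[of "z * s" "- (z ^ a)" z 0 d'] by (simp add: mat_mk mk_eq_iff)
  then have c0: "chs (z * s) (z ^ (a + 1)) d = 0" using z by (simp add: mult.commute)
  define T :: "int poly" where "T = monom 1 1 * (\<Sum>i<a. monom 1 i)"
  define D :: "int poly" where "D = monom 1 (a + 1)"
  have evT: "ev w T = w * (\<Sum>i<a. w ^ i)" for w by (simp add: T_def ev_sum)
  have evD: "ev w D = w ^ (a + 1)" for w by (simp add: D_def)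
  have "ev z (chs T D d) = 0" using c0 by (simp add: ev_chs evT evD s_def)
  moreover obtain m where m: "m > 0" "coprime m n" "z ^ m = cis (2 * (pi / n))"
    using root_to_xi[OF prim n] by blast
  moreover have "z ^ n = 1" using prim by (simp add: primitive_root_of_unity_def)
  ultimately have "ev (z ^ m) (chs T D d) = 0" using n by (intro transfer[of z n]) auto
  then have "chs (cis (2 * (pi / n)) * (\<Sum>i<n div 2. cis (2 * (pi / n)) ^ i)) (cis (2 * (pi / n)) ^ (n div 2 + 1)) d = 0"
    using m(3) by (simp add: ev_chs evT evD a_def)
  then show False using chs_xi_nz[OF n d(1)] by simp
qed

type_synonym pm = "int poly \<times> int poly \<times> int poly \<times> int poly"

fun evm :: "complex \<Rightarrow> pm \<Rightarrow> complex^2^2" where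
  "evm w (a, b, c, d) = mk (ev w a) (ev w b) (ev w c) (ev w d)"

fun pmul :: "pm \<Rightarrow> pm \<Rightarrow> pm" where
  "pmul (a, b, c, d) (e, f, g, h) = (a*e+b*g, a*f+b*h, c*e+d*g, c*f+d*h)"

fun psm :: "int poly \<Rightarrow> pm \<Rightarrow> pm" where
  "psm p (a, b, c, d) = (p*a, p*b, p*c, p*d)"

definition zr :: "int poly \<Rightarrow> int poly \<Rightarrow> bool" where
  "zr F P \<longleftrightarrow> pseudo_mod P F = 0"

fun eqm :: "int poly \<Rightarrow> pm \<Rightarrow> pm \<Rightarrow> bool" where
  "eqm F (a, b, c, d) (e, f, g, h) \<longleftrightarrow> zr F (a - e) \<and> zr F (b - f) \<and> zr F (c - g) \<and> zr F (d - h)"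

definition Rp :: pm where "Rp = (monom 1 1, 1, 0, 1)"
definition Sp :: "nat \<Rightarrow> pm" where "Sp n = (0, - monom 1 (n - 1), 1, 0)"

definition okt :: "int poly \<Rightarrow> pm list \<Rightarrow> pm \<Rightarrow> pm \<Rightarrow> nat \<times> int \<times> nat \<Rightarrow> bool" where
  "okt F W X A r = (case r of (j, s, e) \<Rightarrow> j < length W \<and> eqm F (pmul X A) (psm (smult s (monom 1 e)) (W ! j)))"

definition chk :: "nat \<Rightarrow> int poly \<Rightarrow> pm list \<Rightarrow> ((nat \<times> int \<times> nat) \<times> (nat \<times> int \<times> nat)) list \<Rightarrow> int \<Rightarrow> nat \<Rightarrow> bool" where
  "chk n F W T s0 e0 \<longleftrightarrow> W \<noteq> [] \<and> (s0 = 1 \<or> s0 = -1) \<and>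
     eqm F (1, 0, 0, 1) (psm (smult s0 (monom 1 e0)) (W ! 0)) \<and>
     list_all2 (\<lambda>A (r1, r2). okt F W Rp A r1 \<and> okt F W (Sp n) A r2 \<and>
        (fst (snd r1) = 1 \<or> fst (snd r1) = -1) \<and> (fst (snd r2) = 1 \<or> fst (snd r2) = -1)) W T"

lemma evm_pmul: "evm w (pmul A B) = evm w A ** evm w B"
  by (cases A; cases B) (simp add: mk_mult)

lemma evm_psm: "evm w (psm p A) = mat (ev w p) ** evm w A"
  by (cases A) (simp add: mk_mult mat_mk)

lemma zr_sound: assumes "lead_coeff F = 1" "ev w F = 0" "zr F P" shows "ev w P = 0"
proof -
  obtain q r where qr: "pseudo_divmod P F = (q, r)" by (cases "pseudo_divmod P F") auto
  have F0: "F \<noteq> 0" using assms(1) by auto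
  have "smult (coeff F (degree F) ^ (Suc (degree P) - degree F)) P = F * q + r"
    using pseudo_divmod(1)[OF F0 qr] .
  moreover have "r = 0" using assms(3) qr by (simp add: zr_def pseudo_mod_def)
  ultimately have "P = F * q" using assms(1) by simp
  then show ?thesis using assms(2) by simp
qed

lemma eqm_sound: assumes "lead_coeff F = 1" "ev w F = 0" "eqm F A B" shows "evm w A = evm w B"
  using assms by (cases A; cases B) (auto simp: mk_eq_iff dest!: zr_sound[OF assms(1,2)])

lemma finite_G:
  fixes z :: complex
  assumes z: "z \<noteq> 0" and zn: "z ^ n = 1" and z1: "z \<noteq> 1" and n: "n > 0"
    and F: "lead_coeff F = 1" "ev z F = 0"
    and ck: "chk n F W T s0 e0"
  shows "finite (PSLq_at z)"
proof -
  define C where "C = {c. \<exists>s e. (s = 1 \<or> s = -1) \<and> c = of_int s * z ^ e}"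
  have C_fin: "finite C"
  proof -
    have "C \<subseteq> (\<lambda>(s, e). of_int s * z ^ e) ` ({1, -1} \<times> {..<n})"
    proof
      fix c assume "c \<in> C"
      then obtain s e where se: "s = 1 \<or> s = -1" "c = of_int s * z ^ e" by (auto simp: C_def)
      have "z ^ e = z ^ (n * (e div n) + e mod n)" by simp
      also have "\<dots> = (z ^ n) ^ (e div n) * z ^ (e mod n)" by (simp only: power_add power_mult)
      also have "\<dots> = z ^ (e mod n)" using zn by simp
      finally have "z ^ e = z ^ (e mod n)" .
      then have "c = (\<lambda>(s, e). of_int s * z ^ e) (s, e mod n)" using se(2) by simp
      moreover have "(s, e mod n) \<in> {1, -1} \<times> {..<n}" using se(1) n by auto
      ultimately show "c \<in> (\<lambda>(s, e). of_int s * z ^ e) ` ({1, -1} \<times> {..<n})" by (rule image_eqI)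
    qed
    then show ?thesis by (rule finite_subset) auto
  qed
  have C_mult: "c * c' \<in> C" if "c \<in> C" "c' \<in> C" for c c'
  proof -
    have "\<exists>s e. (s = 1 \<or> s = -1) \<and> c = of_int s * z ^ e" using that(1) by (simp add: C_def)
    then obtain s e where a: "s = 1 \<or> s = -1" "c = of_int s * z ^ e" by blast
    have "\<exists>s e. (s = 1 \<or> s = -1) \<and> c' = of_int s * z ^ e" using that(2) by (simp add: C_def)
    then obtain s' e' where b: "s' = 1 \<or> s' = -1" "c' = of_int s' * z ^ e'" by blast
    have h1: "s * s' = 1 \<or> s * s' = -1" using a(1) b(1) by (elim disjE) simp_all
    have h2: "c * c' = of_int (s * s') * z ^ (e + e')" by (simp add: a(2) b(2) power_add mult_ac)
    show ?thesis unfolding C_def by (intro CollectI exI[of _ "s * s'"] exI[of _ "e + e'"] conjI h1 h2)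
  qed
  have ckd: "W \<noteq> []" "s0 = 1 \<or> s0 = -1" "eqm F (1, 0, 0, 1) (psm (smult s0 (monom 1 e0)) (W ! 0))"
    "list_all2 (\<lambda>A (r1, r2). okt F W Rp A r1 \<and> okt F W (Sp n) A r2 \<and>
        (fst (snd r1) = 1 \<or> fst (snd r1) = -1) \<and> (fst (snd r2) = 1 \<or> fst (snd r2) = -1)) W T"
    using ck by (auto simp: chk_def)
  have Rq_ev: "evm z Rp = Rq z" by (simp add: Rp_def Rq_mk)
  have Sq_ev: "evm z (Sp n) = Sq z"
  proof -
    obtain n' where n': "n = Suc n'" using n by (cases n) auto
    have "z * z ^ (n - 1) = 1" using zn by (simp add: n')
    then have "inverse z = z ^ (n - 1)" by (rule inverse_unique)
    then show ?thesis by (simp add: Sp_def Sq_mk)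
  qed
  have inC: "of_int s * z ^ e \<in> C" if "s = 1 \<or> s = -1" for s e
    unfolding C_def by (rule CollectI, rule exI[of _ s], rule exI[of _ e]) (simp add: that)
  define Pr where "Pr M \<longleftrightarrow> (\<exists>i<length W. \<exists>c\<in>C. M = mat c ** evm z (W ! i))" for M
  have PrI: "Pr (mat c ** evm z (W ! i))" if "i < length W" "c \<in> C" for i c
    unfolding Pr_def by (rule exI[of _ i], rule conjI[OF that(1)], rule bexI[of _ c]) (simp_all add: that)
  have PrE: "\<exists>i c. i < length W \<and> c \<in> C \<and> M = mat c ** evm z (W ! i)" if "Pr M" for M
    using that unfolding Pr_def by blast
  have step: "Pr (X ** M)" if X: "X = Rq z \<or> X = Sq z" and PM: "Pr M" for X M
  proof -
    obtain i c where ic: "i < length W" "c \<in> C" "M = mat c ** evm z (W ! i)" using PrE[OF PM] by blast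
    obtain r1 r2 where rr: "T ! i = (r1, r2)" by (cases "T ! i") auto
    have lt: "i < length T" using ic(1) ckd(4) by (simp add: list_all2_lengthD[symmetric])
    have "okt F W Rp (W ! i) r1 \<and> okt F W (Sp n) (W ! i) r2 \<and>
        (fst (snd r1) = 1 \<or> fst (snd r1) = -1) \<and> (fst (snd r2) = 1 \<or> fst (snd r2) = -1)"
      using list_all2_nthD[OF ckd(4) ic(1)] rr by simp
    then have "\<exists>Xp r. okt F W Xp (W ! i) r \<and> (fst (snd r) = 1 \<or> fst (snd r) = -1) \<and> evm z Xp = X"
    proof (elim conjE)
      assume a1: "okt F W Rp (W ! i) r1" "okt F W (Sp n) (W ! i) r2" "fst (snd r1) = 1 \<or> fst (snd r1) = -1"
        "fst (snd r2) = 1 \<or> fst (snd r2) = -1"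
      from X show ?thesis
      proof
        assume "X = Rq z" then show ?thesis using a1 Rq_ev by (intro exI[of _ Rp] exI[of _ r1]) simp
      next
        assume "X = Sq z" then show ?thesis using a1 Sq_ev by (intro exI[of _ "Sp n"] exI[of _ r2]) simp
      qed
    qed
    then obtain Xp r where r: "okt F W Xp (W ! i) r" "fst (snd r) = 1 \<or> fst (snd r) = -1" "evm z Xp = X"
      by blast
    obtain j s e where jse: "r = (j, s, e)" by (cases r) auto
    have j: "j < length W" and eq: "eqm F (pmul Xp (W ! i)) (psm (smult s (monom 1 e)) (W ! j))"
      using r(1) by (auto simp: okt_def jse)
    have "X ** evm z (W ! i) = mat (of_int s * z ^ e) ** evm z (W ! j)"
      using eqm_sound[OF F eq] by (simp add: evm_pmul evm_psm r(3))
    moreover have sC: "of_int s * z ^ e \<in> C" using r(2) by (intro inC) (simp add: jse)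
    moreover have "X ** M = mat c ** (X ** evm z (W ! i))"
    proof -
      have "X ** M = (X ** mat c) ** evm z (W ! i)" by (simp add: ic(3) matrix_mul_assoc)
      also have "X ** mat c = mat c ** X" by (rule mat_comm[symmetric])
      finally show ?thesis by (simp add: matrix_mul_assoc)
    qed
    ultimately have "X ** M = mat (c * (of_int s * z ^ e)) ** evm z (W ! j)"
      by (simp add: matrix_mul_assoc mat_mat)
    then show ?thesis using PrI[OF j C_mult[OF ic(2) sC]] by simp
  qed
  have scal: "Pr (mat c' ** M)" if cC: "c' \<in> C" and PM: "Pr M" for c' M
  proof -
    obtain i c where ic: "i < length W" "c \<in> C" "M = mat c ** evm z (W ! i)" using PrE[OF PM] by blast
    have "mat c' ** M = mat (c' * c) ** evm z (W ! i)" by (simp add: ic(3) matrix_mul_assoc mat_mat)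
    then show ?thesis using PrI[OF ic(1) C_mult[OF cC ic(2)]] by simp
  qed
  have Rpow: "Pr (mpow (Rq z) k ** M)" if "Pr M" for k M
    using that by (induction k) (auto simp: matrix_mul_assoc[symmetric] intro: step)
  have Rinv: "matrix_inv (Rq z) = mpow (Rq z) (n - 1)"
  proof (rule matrix_inv_eqI)
    have s0: "(\<Sum>i<n. z ^ i) = 0" using power_diff_1_eq[of z n] zn z1 by simp
    have e1: "mpow (Rq z) n = mat 1" by (simp add: mpow_R zn s0 mat_mk)
    obtain n' where n': "n = Suc n'" using n by (cases n) auto
    have e2: "mpow (Rq z) n = Rq z ** mpow (Rq z) (n - 1)" by (simp add: n')
    have "mpow (Rq z) n = mpow (Rq z) (n - 1) ** mpow (Rq z) 1"
      using mpow_add[of "Rq z" "n - 1" 1] by (simp add: n')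
    then have e3: "mpow (Rq z) n = mpow (Rq z) (n - 1) ** Rq z" by simp
    show "Rq z ** mpow (Rq z) (n - 1) = mat 1" using e1 e2 by simp
    show "mpow (Rq z) (n - 1) ** Rq z = mat 1" using e1 e3 by simp
  qed
  have Sinv: "matrix_inv (Sq z) = mat (- z) ** Sq z"
    by (rule matrix_inv_eqI) (use z in \<open>simp_all add: Sq_mk mat_mk mk_mult mk_eq_iff\<close>)
  have mz: "- z \<in> C" using inC[of "-1" 1] by simp
  have allG: "Pr M" if "M \<in> Gq z" for M
    using that unfolding Gq_def
  proof induction
    case one
    have "evm z (1, 0, 0, 1) = evm z (psm (smult s0 (monom 1 e0)) (W ! 0))" by (rule eqm_sound[OF F ckd(3)])
    then have "mat 1 = mat (of_int s0 * z ^ e0) ** evm z (W ! 0)" by (simp add: evm_psm mat_mk)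
    moreover have "of_int s0 * z ^ e0 \<in> C" using ckd(2) by (rule inC)
    moreover have "0 < length W" using ckd(1) by simp
    ultimately show ?case using PrI by simp
  next
    case (mul M X) then show ?case by (intro step) auto
  next
    case (mul_inv M X)
    then show ?case
    proof (cases "X = Rq z")
      case True then show ?thesis using mul_inv Rinv Rpow by simp
    next
      case False
      then have "X = Sq z" using mul_inv by simp
      then show ?thesis using mul_inv Sinv by (simp add: matrix_mul_assoc[symmetric] scal step mz)
    qed
  qed
  have "Gq z \<subseteq> (\<lambda>(c, i). mat c ** evm z (W ! i)) ` (C \<times> {..<length W})"
  proof
    fix M assume "M \<in> Gq z"
    then obtain i c where "i < length W" "c \<in> C" "M = mat c ** evm z (W ! i)" using PrE allG by blast
    then show "M \<in> (\<lambda>(c, i). mat c ** evm z (W ! i)) ` (C \<times> {..<length W})"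
      by (intro image_eqI[where x="(c, i)"]) auto
  qed
  then have "finite (Gq z)" by (rule finite_subset) (use C_fin in auto)
  then show ?thesis unfolding PSLq_at_def by simp
qed

definition W2 :: "pm list" where
  "W2 = [([:-1:], 0, 0, [:-1:]),
  ([:-1:], [:1:], 0, [:1:]),
  (0, [:-1:], [:-1:], 0),
  (0, [:-1:], [:1:], [:-1:]),
  ([:-1:], [:1:], [:-1:], 0),
  ([:-1:], 0, [:-1:], [:1:])]"

definition T2 :: "((nat \<times> int \<times> nat) \<times> (nat \<times> int \<times> nat)) list" where
  "T2 = [((1,1,1),(2,1,0)),
  ((0,1,1),(3,1,1)),
  ((4,1,0),(0,1,0)),
  ((5,1,1),(1,1,1)),
  ((2,1,0),(5,1,0)),
  ((3,1,1),(4,1,0))]"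

lemma chk2: "chk 2 [:1,1:] W2 T2 (1) 1"
  unfolding W2_def T2_def by code_simp

definition W3 :: "pm list" where
  "W3 = [([:-1,-1:], 0, 0, [:-1,-1:]),
  ([:-1,-1:], [:0,1:], 0, [:0,1:]),
  (0, [:-1,-1:], [:-1:], 0),
  ([:-1,-1:], [:1,1:], 0, [:1:]),
  (0, [:-1,-1:], [:0,-1:], [:-1:]),
  ([:-1,-1:], [:1,1:], [:-1,-1:], 0),
  (0, [:-1,-1:], [:1,1:], [:-1,-1:]),
  ([:-1,-1:], 0, [:-1,-1:], [:0,1:]),
  ([:-1,-1:], [:0,1:], [:-1:], 0),
  ([:-1,-1:], 0, [:-1:], [:1:]),
  ([:-1,-1:], [:0,1:], [:-1,-1:], [:1,1:]),
  ([:-1,-1:], [:1,1:], [:-1:], [:1,1:])]"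

definition T3 :: "((nat \<times> int \<times> nat) \<times> (nat \<times> int \<times> nat)) list" where
  "T3 = [((1,1,1),(2,-1,2)),
  ((3,1,1),(4,-1,1)),
  ((5,-1,1),(0,1,0)),
  ((0,1,1),(6,-1,0)),
  ((7,-1,2),(1,1,1)),
  ((8,-1,2),(9,-1,2)),
  ((10,-1,0),(3,1,2)),
  ((11,-1,2),(8,-1,2)),
  ((2,1,0),(7,1,0)),
  ((6,1,1),(5,1,0)),
  ((9,-1,2),(11,-1,2)),
  ((4,1,2),(10,1,0))]"

lemma chk3: "chk 3 [:1,1,1:] W3 T3 (1) 1"
  unfolding W3_def T3_def by code_simp

definition W4 :: "pm list" where
  "W4 = [([:-1:], 0, 0, [:-1:]),
  ([:-1:], [:0,1:], 0, [:0,1:]),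
  (0, [:-1:], [:0,1:], 0),
  ([:-1:], [:1,1:], 0, [:1:]),
  (0, [:-1:], [:-1:], [:0,1:]),
  ([:-1:], [:1:], [:-1:], 0),
  ([:-1:], [:1:], 0, [:0,-1:]),
  (0, [:-1:], [:0,-1:], [:-1,1:]),
  ([:-1:], 0, [:-1:], [:0,1:]),
  ([:-1,-1:], [:0,1:], [:-1:], 0),
  ([:-1:], 0, [:0,1:], [:0,-1:]),
  (0, [:-1:], [:1:], [:-1:]),
  ([:-1:], [:0,1:], [:-1:], [:1,1:]),
  ([:-1,-1:], [:0,1:], [:-1:], [:0,1:]),
  ([:-1:], [:0,1:], [:0,1:], 0),
  ([:-1:], 0, [:-1,1:], [:1:]),
  ([:-1:], [:1,1:], [:-1:], [:1:]),
  ([:-1,-1:], [:0,1:], [:-1:], [:1,1:]),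
  ([:-1:], [:1,1:], [:0,1:], [:1:]),
  ([:-1:], [:0,1:], [:-1,1:], [:1:]),
  ([:-1:], [:1:], [:-1,1:], [:1:]),
  ([:-1,-1:], [:0,1:], [:-1:], [:1:]),
  ([:-1:], [:1:], [:0,1:], [:1,-1:]),
  ([:-1:], [:1,1:], [:-1,1:], [:1:])]"

definition T4 :: "((nat \<times> int \<times> nat) \<times> (nat \<times> int \<times> nat)) list" where
  "T4 = [((1,1,1),(2,1,1)),
  ((3,1,1),(4,1,0)),
  ((5,1,3),(0,1,0)),
  ((6,1,1),(7,1,3)),
  ((8,1,0),(1,1,1)),
  ((9,1,0),(10,1,1)),
  ((0,1,1),(11,1,2)),
  ((12,1,1),(3,1,2)),
  ((13,1,0),(14,1,1)),
  ((14,1,1),(15,1,1)),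
  ((11,1,1),(5,1,0)),
  ((16,1,2),(6,1,3)),
  ((17,1,0),(18,1,1)),
  ((18,1,1),(19,1,1)),
  ((2,1,0),(8,1,0)),
  ((20,1,0),(9,1,0)),
  ((21,1,0),(22,1,1)),
  ((22,1,1),(23,1,1)),
  ((4,1,3),(12,1,0)),
  ((15,1,0),(13,1,0)),
  ((23,1,0),(21,1,0)),
  ((10,1,1),(20,1,1)),
  ((7,1,2),(16,1,0)),
  ((19,1,0),(17,1,0))]"

lemma chk4: "chk 4 [:1,0,1:] W4 T4 (1) 2"
  unfolding W4_def T4_def by code_simp

definition W5 :: "pm list" where
  "W5 = [([:-1,-1,-1,-1:], 0, 0, [:-1,-1,-1,-1:]),
  ([:-1,-1,-1,-1:], [:0,0,0,1:], 0, [:0,0,0,1:]),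
  (0, [:-1,-1,-1,-1:], [:-1:], 0),
  ([:-1,-1,-1,-1:], [:0,0,1,1:], 0, [:0,0,1:]),
  (0, [:-1,-1,-1,-1:], [:0,-1:], [:-1:]),
  ([:-1,-1,-1,-1:], [:1,1,1,1:], [:-1,-1,-1,-1:], 0),
  ([:-1,-1,-1,-1:], [:0,1,1,1:], 0, [:0,1:]),
  (0, [:-1,-1,-1,-1:], [:0,0,-1:], [:-1,-1:]),
  ([:-1,-1,-1,-1:], 0, [:-1,-1,-1,-1:], [:0,0,0,1:]),
  ([:-1,-1,-1:], [:1,1,1,1:], [:0,0,0,1:], 0),
  ([:-1,-1,-1,-1:], 0, [:-1:], [:1:]),
  ([:-1,-1,-1,-1:], [:1,1,1,1:], 0, [:1:]),
  (0, [:-1,-1,-1,-1:], [:0,0,0,-1:], [:-1,-1,-1:]),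
  ([:-1,-1,-1,-1:], [:0,0,0,1:], [:-1,-1,-1,-1:], [:0,0,1,1:]),
  ([:-1,-1,-1:], [:0,0,1:], [:0,0,0,1:], [:0,0,1:]),
  ([:-1,-1,-1,-1:], [:0,0,0,1:], [:-1:], 0),
  ([:-1,-1,-1:], [:0,0,1:], [:-1:], 0),
  ([:-1,-1,-1,-1:], 0, [:-1,-1:], [:0,1:]),
  (0, [:-1,-1,-1,-1:], [:1,1,1,1:], [:-1,-1,-1,-1:]),
  ([:-1,-1,-1,-1:], [:0,0,1,1:], [:-1,-1,-1,-1:], [:0,1,1,1:]),
  ([:-1,-1,-1:], [:0,1,1,1:], [:0,0,0,1:], [:0,1,1:]),
  ([:-1,-1,-1,-1:], [:0,0,1,1:], [:-1:], [:1,1,1,1:]),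
  ([:-1,-1,-1:], [:0,1,1,1:], [:-1:], [:1,1,1,1:]),
  ([:-1,-1,-1,-1:], [:0,0,0,1:], [:-1,-1:], [:1,1,1,1:]),
  ([:-1,-1,-1,-1:], 0, [:-1,-1,-1:], [:0,0,1:]),
  ([:-1,-1,-1,-1:], [:1,1,1,1:], [:-1,-1,-1:], [:1,1,1,1:]),
  ([:-1,-1,-1,-1:], [:0,1,1,1:], [:-1,-1,-1,-1:], [:1,1,1,1:]),
  ([:-1,-1,-1:], [:1,1,2,1:], [:0,0,0,1:], [:1,1,1:]),
  ([:-1,-1,-1,-1:], [:0,1,1,1:], [:-1:], [:1,1,1:]),
  ([:-1,-1,-1:], [:1,1,2,1:], [:-1:], [:1,1,1:]),
  ([:-1,-1,-1,-1:], [:0,0,1,1:], [:-1,-1:], [:0,1,1:]),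
  ([:-1,-1,-1,-1:], [:0,0,0,1:], [:-1,-1,-1:], [:0,1,1,1:]),
  ([:-1,-1,-1:], [:1,1,1,1:], [:-1,-1:], [:1,1,1,1:]),
  ([:-1,-1,-1:], [:0,1,1:], [:-1,-1:], [:0,1:]),
  ([:-1,-1,-1:], [:1,1,1,1:], [:-1:], [:1:]),
  ([:-1,-1,-1:], [:0,1,1:], [:0,0,0,1:], [:0,0,0,-1:]),
  ([:-1,-1,-1,-1:], [:1,1,1,1:], [:-1:], [:1,1:]),
  ([:-1,-1,-1:], [:0,1,1:], [:-1:], [:1,1:]),
  ([:-1,-1,-1,-1:], [:0,1,1,1:], [:-1,-1:], [:1,2,1,1:]),
  ([:-1,-1,-1,-1:], [:0,0,1,1:], [:-1,-1,-1:], [:1,1,2,1:]),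
  ([:-1,-1,-1:], [:0,0,1:], [:-1,-1:], [:0,1,1:]),
  ([:-1,-2,-1,-1:], [:0,1,1,1:], [:-1,-1:], [:1,1,1,1:]),
  ([:-1,-1,-1:], [:0,0,1:], [:0,0,1,1:], [:0,0,0,-1:]),
  ([:-1,-2,-1,-1:], [:0,1,1,1:], [:-1,-1:], [:0,1:]),
  ([:-1,-1,-1:], [:1,1,1,1:], [:0,0,1,1:], [:1,1:]),
  ([:-1,-1,-1,-1:], [:1,1,1,1:], [:-1,-1:], [:1,1,1:]),
  ([:-1,-1,-1,-1:], [:0,1,1,1:], [:-1,-1,-1:], [:0,1,1:]),
  ([:-1,-1,-1:], [:0,1,1,1:], [:-1,-1:], [:1,2,1,1:]),
  ([:-1,-2,-1,-1:], [:0,1,1,1:], [:-1,-1:], [:0,1,1:]),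
  ([:-1,-1,-1:], [:0,1,1,1:], [:0,0,1,1:], [:0,1:]),
  ([:-1,-1,-1:], [:0,0,1:], [:-1,0,0,1:], [:1,1,1:]),
  ([:-1,-1,-1:], [:1,1,1,1:], [:-1,0,0,1:], [:1,1,1:]),
  ([:-1,-1,-1:], [:1,1,2,1:], [:-1,-1:], [:1,1,1:]),
  ([:-1,-2,-1,-1:], [:0,1,1,1:], [:-1,-1:], [:1,2,1,1:]),
  ([:-1,-1,-1:], [:1,1,2,1:], [:0,0,1,1:], [:1,1,1:]),
  ([:-1,-1,-1:], [:0,1,1,1:], [:-1,0,0,1:], [:1,1,1:]),
  ([:-1,-1,-1:], [:0,1,1:], [:-1,0,0,1:], [:1,1,1:]),
  ([:-1,-2,-1,-1:], [:0,1,1,1:], [:-1,-1:], [:1,1,1:]),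
  ([:-1,-1,-1:], [:0,1,1:], [:0,0,1,1:], [:0,1,0,-1:]),
  ([:-1,-1,-1:], [:1,1,2,1:], [:-1,0,0,1:], [:1,1,1:])]"

definition T5 :: "((nat \<times> int \<times> nat) \<times> (nat \<times> int \<times> nat)) list" where
  "T5 = [((1,1,1),(2,-1,4)),
  ((3,1,1),(4,-1,3)),
  ((5,-1,1),(0,1,0)),
  ((6,1,1),(7,-1,2)),
  ((8,-1,2),(1,1,1)),
  ((9,1,1),(10,-1,4)),
  ((11,1,1),(12,-1,1)),
  ((13,-1,3),(3,1,2)),
  ((14,1,1),(15,-1,4)),
  ((16,-1,3),(17,-1,3)),
  ((18,1,1),(5,1,0)),
  ((0,1,1),(18,-1,0)),
  ((19,-1,4),(6,1,3)),
  ((20,1,1),(21,-1,4)),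
  ((22,-1,3),(23,-1,3)),
  ((2,1,0),(8,1,0)),
  ((15,1,0),(24,1,0)),
  ((25,-1,2),(9,1,1)),
  ((26,-1,0),(11,1,4)),
  ((27,1,1),(28,-1,4)),
  ((29,-1,3),(30,-1,3)),
  ((4,1,4),(13,1,0)),
  ((21,1,0),(31,1,0)),
  ((24,-1,2),(14,1,1)),
  ((32,-1,3),(16,-1,4)),
  ((33,-1,3),(34,-1,4)),
  ((35,1,1),(36,-1,4)),
  ((37,-1,3),(38,-1,3)),
  ((7,1,3),(19,1,0)),
  ((28,1,0),(39,1,0)),
  ((31,-1,2),(20,1,1)),
  ((40,-1,3),(22,-1,4)),
  ((41,1,0),(42,1,1)),
  ((43,1,0),(44,1,1)),
  ((10,1,0),(25,1,0)),
  ((34,-1,3),(45,-1,3)),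
  ((12,1,2),(26,1,0)),
  ((36,1,0),(46,1,0)),
  ((39,-1,2),(27,1,1)),
  ((47,-1,3),(29,-1,4)),
  ((48,1,0),(49,1,1)),
  ((49,-1,3),(50,1,1)),
  ((17,-1,2),(32,-1,3)),
  ((42,-1,3),(51,1,1)),
  ((45,-1,2),(33,-1,3)),
  ((46,-1,2),(35,1,1)),
  ((52,-1,3),(37,-1,4)),
  ((53,1,0),(54,1,1)),
  ((54,-1,3),(55,1,1)),
  ((23,-1,2),(40,-1,3)),
  ((51,1,0),(41,-1,3)),
  ((56,1,0),(43,-1,3)),
  ((57,1,0),(58,1,1)),
  ((58,-1,3),(59,1,1)),
  ((30,-1,2),(47,-1,3)),
  ((50,1,0),(48,-1,3)),
  ((59,1,0),(57,-1,3)),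
  ((44,-1,3),(56,1,1)),
  ((38,-1,2),(52,-1,3)),
  ((55,1,0),(53,-1,3))]"

lemma chk5: "chk 5 [:1,1,1,1,1:] W5 T5 (1) 1"
  unfolding W5_def T5_def by code_simp

lemma ev_pCons: "ev w (pCons a p) = of_int a + w * ev w p"
  by (simp add: ev_def map_poly_pCons)

lemma backward:
  fixes z :: complex
  assumes z: "z \<noteq> 0" and nn: "n \<in> {2,3,4,5}" and prim: "primitive_root_of_unity n z"
  shows "finite (PSLq_at z)"
proof -
  have n0: "n > 0" and zn: "z ^ n = 1" and pr: "\<And>k. 0 < k \<Longrightarrow> k < n \<Longrightarrow> z ^ k \<noteq> 1"
    using prim by (auto simp: primitive_root_of_unity_def)
  have n1: "1 < n" using nn by auto
  have z1: "z \<noteq> 1" using pr[of 1] n1 by auto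
  have z1': "z - 1 \<noteq> 0" using z1 by simp
  from nn show ?thesis
  proof (elim insertE)
    assume n: "n = 2"
    have "(z - 1) * (1 + z) = z ^ 2 - 1" by (simp add: algebra_simps power2_eq_square)
    then have "ev z [:1,1:] = 0" using zn n z1' by (simp add: ev_pCons)
    then show ?thesis using finite_G[OF z zn z1 n0 _ _ chk2[folded n]] by simp
  next
    assume n: "n = 3"
    have "(z - 1) * (1 + z * (1 + z)) = z ^ 3 - 1" by (simp add: algebra_simps power3_eq_cube)
    then have "ev z [:1,1,1:] = 0" using zn n z1' by (simp add: ev_pCons)
    then show ?thesis using finite_G[OF z zn z1 n0 _ _ chk3[folded n]] by simp
  next
    assume n: "n = 4"
    have z2: "z ^ 2 - 1 \<noteq> 0" using pr[of 2] n by simp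
    have "(z ^ 2 - 1) * (1 + z * (z * 1)) = z ^ 4 - 1"
      by (simp add: algebra_simps power2_eq_square power4_eq_xxxx)
    then have "ev z [:1,0,1:] = 0" using zn n z2 by (simp add: ev_pCons)
    then show ?thesis using finite_G[OF z zn z1 n0 _ _ chk4[folded n]] by simp
  next
    assume n: "n = 5"
    have "(z - 1) * (1 + z * (1 + z * (1 + z * (1 + z)))) = z ^ 5 - 1"
      by (simp add: algebra_simps eval_nat_numeral)
    then have "ev z [:1,1,1,1,1:] = 0" using zn n z1' by (simp add: ev_pCons)
    then show ?thesis using finite_G[OF z zn z1 n0 _ _ chk5[folded n]] by simp
  qed simp
qed

lemma forward:
  fixes z :: complex
  assumes fin: "finite (PSLq_at z)" and z: "z \<noteq> 0"
  shows "\<exists>n\<in>{2,3,4,5}. primitive_root_of_unity n z"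
proof -
  obtain d where d: "d > 0" "z ^ d = 1" using step1(1)[OF fin z] by blast
  have z1: "z \<noteq> 1" using step1(2)[OF fin z] .
  define n where "n = (LEAST k. 0 < k \<and> z ^ k = 1)"
  have ex: "\<exists>k. 0 < k \<and> z ^ k = 1" using d by blast
  have nk: "0 < n \<and> z ^ n = 1" unfolding n_def by (rule LeastI_ex[OF ex])
  have nmin: "\<not> (0 < k \<and> z ^ k = 1)" if "k < n" for k
    using not_less_Least[of k "\<lambda>k. 0 < k \<and> z ^ k = 1"] that unfolding n_def by blast
  have prim: "primitive_root_of_unity n z"
    unfolding primitive_root_of_unity_def using nk nmin by blast
  have "n \<noteq> 1" using nk z1 by auto
  moreover have "\<not> n \<ge> 6" using not_ge6[OF fin z prim] by blast
  ultimately have "n \<in> {2,3,4,5}" using nk by auto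
  then show ?thesis using prim by blast
qed

theorem corollary4p3:
  fixes z :: complex
  assumes "z \<noteq> 0"
  shows "finite (PSLq_at z) \<longleftrightarrow> (\<exists>n\<in>{2,3,4,5}. primitive_root_of_unity n z)"
  using forward[OF _ assms] backward[OF assms] by blast

end
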